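(* Let $n \ge 2$ and let $\mathcal{B}$ be a non-degenerate deformation of the type $B_n$ Coxeter arrangement in $\mathbb{R}^n$. Let $H_0 \in \mathcal{B}$. Then the restriction $\mathcal{B}^{H_0}$, viewed in $\mathbb{R}^{n-1}$ via the isomorphism $H_0 \to \mathbb{R}^{n-1}$ that deletes one coordinate (the coordinate $x_k$ if $H_0 : x_k = a$, and the coordinate $x_l$ if $H_0 : x_k \pm x_l = a$ with $k<l$), is a non-degenerate deformation of the type $B_{n-1}$ Coxeter arrangement in $\mathbb{R}^{n-1}$.
   Context: A non-degenerate deformation of the type $B_n$ Coxeter arrangement in $\mathbb{R}^n$ is a finite hyperplane arrangement of the form $\{x_i = a_i^{(1)},\ldots,a_i^{(r_i)}\} \cup \{x_i-x_j = b_{ij}^{(1)},\ldots,b_{ij}^{(s_{ij})}\} \cup \{x_i+x_j = c_{ij}^{(1)},\ldots,c_{ij}^{(t_{ij})}\}$ (over $1\le i\le n$ resp. $1 \le i\ne j\le n$) with all constants real and $r_i,s_{ij},t_{ij} \ge 1$, i.e. every hyperplane is parallel to one of $x_i=0$, $x_i-x_j=0$, $x_i+x_j=0$, and each of these directions contains at least one hyperplane of the arrangement. For $H_0 \in \mathcal{B}$, the restriction is $\mathcal{B}^{H_0} = \{H_0 \cap H : H \in \mathcal{B}\setminus\{H_0\},\ H_0\cap H \neq \emptyset\}$, an arrangement in the affine space $H_0$. *)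

theory Defs
  imports Main "HOL-Library.Library"
begin

text \<open>Points of R^n are functions nat => real vanishing at indices >= n;
  coordinates are indexed 0..n-1 (the paper uses 1..n).\<close>

definition rspace :: "nat \<Rightarrow> (nat \<Rightarrow> real) set" where
  "rspace n = {x. \<forall>i\<ge>n. x i = 0}"

definition hyp_coord :: "nat \<Rightarrow> nat \<Rightarrow> real \<Rightarrow> (nat \<Rightarrow> real) set" where
  "hyp_coord n i a = {x \<in> rspace n. x i = a}"

definition hyp_minus :: "nat \<Rightarrow> nat \<Rightarrow> nat \<Rightarrow> real \<Rightarrow> (nat \<Rightarrow> real) set" where
  "hyp_minus n i j b = {x \<in> rspace n. x i - x j = b}"

definition hyp_plus :: "nat \<Rightarrow> nat \<Rightarrow> nat \<Rightarrow> real \<Rightarrow> (nat \<Rightarrow> real) set" where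
  "hyp_plus n i j c = {x \<in> rspace n. x i + x j = c}"

definition B_deformation :: "nat \<Rightarrow> (nat \<Rightarrow> real) set set \<Rightarrow> bool" where
  "B_deformation n \<B> \<longleftrightarrow>
     finite \<B> \<and>
     (\<forall>H\<in>\<B>. (\<exists>i a. i < n \<and> H = hyp_coord n i a)
           \<or> (\<exists>i j b. i < n \<and> j < n \<and> i \<noteq> j \<and> H = hyp_minus n i j b)
           \<or> (\<exists>i j c. i < n \<and> j < n \<and> i \<noteq> j \<and> H = hyp_plus n i j c)) \<and>
     (\<forall>i<n. \<exists>a. hyp_coord n i a \<in> \<B>) \<and>
     (\<forall>i j. i < n \<and> j < n \<and> i \<noteq> j \<longrightarrow>
        (\<exists>b. hyp_minus n i j b \<in> \<B>) \<and> (\<exists>c. hyp_plus n i j c \<in> \<B>))"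

definition restriction :: "'a set set \<Rightarrow> 'a set \<Rightarrow> 'a set set" where
  "restriction \<B> H0 = {H0 \<inter> H | H. H \<in> \<B> - {H0} \<and> H0 \<inter> H \<noteq> {}}"

definition del_coord :: "nat \<Rightarrow> (nat \<Rightarrow> real) \<Rightarrow> (nat \<Rightarrow> real)" where
  "del_coord m x = (\<lambda>i. if i < m then x i else x (Suc i))"

end

theory Submission
  imports Defs
begin

definition insc :: "nat \<Rightarrow> real \<Rightarrow> (nat \<Rightarrow> real) \<Rightarrow> nat \<Rightarrow> real" where
  "insc m v y = (\<lambda>i. if i < m then y i else if i = m then v else y (i - 1))"

definition jdx :: "nat \<Rightarrow> nat \<Rightarrow> nat" where
  "jdx m i = (if i < m then i else i - 1)"

definition idx :: "nat \<Rightarrow> nat \<Rightarrow> nat" where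
  "idx m j = (if j < m then j else Suc j)"

definition isB :: "nat \<Rightarrow> (nat \<Rightarrow> real) set \<Rightarrow> bool" where
  "isB n H \<longleftrightarrow> (\<exists>i a. i < n \<and> H = hyp_coord n i a)
           \<or> (\<exists>i j b. i < n \<and> j < n \<and> i \<noteq> j \<and> H = hyp_minus n i j b)
           \<or> (\<exists>i j c. i < n \<and> j < n \<and> i \<noteq> j \<and> H = hyp_plus n i j c)"

definition Rs :: "nat \<Rightarrow> nat \<Rightarrow> ((nat \<Rightarrow> real) \<Rightarrow> real) \<Rightarrow> (nat \<Rightarrow> real) set \<Rightarrow> (nat \<Rightarrow> real) set" where
  "Rs n m g H = {y \<in> rspace (n - 1). insc m (g y) y \<in> H}"

lemma ins_other: "i \<noteq> m \<Longrightarrow> insc m v y i = y (jdx m i)"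
  by (auto simp: insc_def jdx_def)

lemma ins_m[simp]: "insc m v y m = v"
  by (auto simp: insc_def)

lemma del_ins[simp]: "del_coord m (insc m v y) = y"
  by (auto simp: insc_def del_coord_def)

lemma ins_del: "insc m (x m) (del_coord m x) = x"
  by (rule ext) (auto simp: insc_def del_coord_def)

lemma ins_rspace: "m < n \<Longrightarrow> y \<in> rspace (n - 1) \<Longrightarrow> insc m v y \<in> rspace n"
  by (auto simp: insc_def rspace_def)

lemma del_rspace: "m < n \<Longrightarrow> x \<in> rspace n \<Longrightarrow> del_coord m x \<in> rspace (n - 1)"
  by (auto simp: del_coord_def rspace_def)

lemma jdx_lt: "m < n \<Longrightarrow> i < n \<Longrightarrow> i \<noteq> m \<Longrightarrow> jdx m i < n - 1"
  by (auto simp: jdx_def)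

lemma jdx_inj: "i \<noteq> m \<Longrightarrow> j \<noteq> m \<Longrightarrow> i \<noteq> j \<Longrightarrow> jdx m i \<noteq> jdx m j"
  by (auto simp: jdx_def)

lemma jdx_small: "k < m \<Longrightarrow> jdx m k = k"
  by (auto simp: jdx_def)

lemma idx_props: "m < n \<Longrightarrow> j < n - 1 \<Longrightarrow> idx m j < n \<and> idx m j \<noteq> m \<and> jdx m (idx m j) = j"
  by (auto simp: idx_def jdx_def)

lemma idx_inj: "j1 \<noteq> j2 \<Longrightarrow> idx m j1 \<noteq> idx m j2"
  by (auto simp: idx_def)

lemma img:
  assumes "m < n"
  shows "del_coord m ` ({x\<in>rspace n. x m = g (del_coord m x)} \<inter> H) = Rs n m g H"
proof
  show "del_coord m ` ({x\<in>rspace n. x m = g (del_coord m x)} \<inter> H) \<subseteq> Rs n m g H"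
  proof
    fix y assume "y \<in> del_coord m ` ({x\<in>rspace n. x m = g (del_coord m x)} \<inter> H)"
    then obtain x where x: "x \<in> rspace n" "x m = g (del_coord m x)" "x \<in> H" "y = del_coord m x" by auto
    have "insc m (g y) y = x" using ins_del[of m x] unfolding x(4) x(2)[symmetric] .
    then show "y \<in> Rs n m g H" using x del_rspace[OF assms] by (auto simp: Rs_def)
  qed
next
  show "Rs n m g H \<subseteq> del_coord m ` ({x\<in>rspace n. x m = g (del_coord m x)} \<inter> H)"
  proof
    fix y assume "y \<in> Rs n m g H"
    then have y: "y \<in> rspace (n - 1)" "insc m (g y) y \<in> H" by (auto simp: Rs_def)
    have mem: "insc m (g y) y \<in> {x\<in>rspace n. x m = g (del_coord m x)} \<inter> H"
      using y ins_rspace[OF assms] by (simp only: del_ins ins_m mem_Collect_eq Int_iff simp_thms)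
    show "y \<in> del_coord m ` ({x\<in>rspace n. x m = g (del_coord m x)} \<inter> H)"
      by (rule image_eqI[OF _ mem]) simp
  qed
qed

lemma gen_coord: "m < n \<Longrightarrow> i \<noteq> m \<Longrightarrow> Rs n m g (hyp_coord n i c) = hyp_coord (n - 1) (jdx m i) c"
  by (auto simp: Rs_def hyp_coord_def ins_other ins_rspace)

lemma gen_minus: "m < n \<Longrightarrow> i \<noteq> m \<Longrightarrow> j \<noteq> m \<Longrightarrow>
   Rs n m g (hyp_minus n i j c) = hyp_minus (n - 1) (jdx m i) (jdx m j) c"
  by (auto simp: Rs_def hyp_minus_def ins_other ins_rspace)

lemma gen_plus: "m < n \<Longrightarrow> i \<noteq> m \<Longrightarrow> j \<noteq> m \<Longrightarrow>
   Rs n m g (hyp_plus n i j c) = hyp_plus (n - 1) (jdx m i) (jdx m j) c"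
  by (auto simp: Rs_def hyp_plus_def ins_other ins_rspace)

lemma minus_swap: "hyp_minus n i j b = hyp_minus n j i (- b)"
  by (auto simp: hyp_minus_def)

lemma plus_swap: "hyp_plus n i j b = hyp_plus n j i b"
  by (auto simp: hyp_plus_def)

lemma isB_props:
  assumes "isB n S"
  shows "S \<noteq> {} \<and> S \<noteq> rspace n"
  using assms unfolding isB_def
proof (elim disjE exE conjE)
  fix i a assume h: "i < n" "S = hyp_coord n i a"
  have "(\<lambda>t. if t = i then a else 0) \<in> S" using h by (auto simp: hyp_coord_def rspace_def)
  moreover have "(\<lambda>t. if t = i then a + 1 else 0) \<in> rspace n - S" using h by (auto simp: hyp_coord_def rspace_def)
  ultimately show ?thesis by blast
next
  fix i j b assume h: "i < n" "j < n" "i \<noteq> j" "S = hyp_minus n i j b"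
  have "(\<lambda>t. if t = i then b else 0) \<in> S" using h by (auto simp: hyp_minus_def rspace_def)
  moreover have "(\<lambda>t. if t = i then b + 1 else 0) \<in> rspace n - S" using h by (auto simp: hyp_minus_def rspace_def)
  ultimately show ?thesis by blast
next
  fix i j b assume h: "i < n" "j < n" "i \<noteq> j" "S = hyp_plus n i j b"
  have "(\<lambda>t. if t = i then b else 0) \<in> S" using h by (auto simp: hyp_plus_def rspace_def)
  moreover have "(\<lambda>t. if t = i then b + 1 else 0) \<in> rspace n - S" using h by (auto simp: hyp_plus_def rspace_def)
  ultimately show ?thesis by blast
qed

lemma Rs_self: "m < n \<Longrightarrow> Rs n m g {x\<in>rspace n. x m = g (del_coord m x)} = rspace (n - 1)"
  by (auto simp: Rs_def ins_rspace)

lemma generic: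
  assumes n2: "2 \<le> n" and B: "B_deformation n \<B>" and H0B: "H0 \<in> \<B>" and mn: "m < n"
    and H0eq: "H0 = {x\<in>rspace n. x m = g (del_coord m x)}"
    and fc: "\<And>c. hyp_coord n m c \<noteq> H0 \<Longrightarrow> Rs n m g (hyp_coord n m c) \<noteq> {} \<Longrightarrow>
               isB (n - 1) (Rs n m g (hyp_coord n m c))"
    and fm: "\<And>i b. i < n \<Longrightarrow> i \<noteq> m \<Longrightarrow> hyp_minus n i m b \<noteq> H0 \<Longrightarrow> Rs n m g (hyp_minus n i m b) \<noteq> {} \<Longrightarrow>
               isB (n - 1) (Rs n m g (hyp_minus n i m b))"
    and fp: "\<And>i b. i < n \<Longrightarrow> i \<noteq> m \<Longrightarrow> hyp_plus n i m b \<noteq> H0 \<Longrightarrow> Rs n m g (hyp_plus n i m b) \<noteq> {} \<Longrightarrow>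
               isB (n - 1) (Rs n m g (hyp_plus n i m b))"
  shows "B_deformation (n - 1) ((`) (del_coord m) ` restriction \<B> H0)"
proof -
  have imgH: "del_coord m ` (H0 \<inter> H) = Rs n m g H" for H
    using img[OF mn, of g H] H0eq by simp
  have Bfin: "finite \<B>" and Bforms: "\<And>H. H \<in> \<B> \<Longrightarrow> isB n H"
    and Bc: "\<And>i. i < n \<Longrightarrow> \<exists>a. hyp_coord n i a \<in> \<B>"
    and Bmp: "\<And>i j. i < n \<Longrightarrow> j < n \<Longrightarrow> i \<noteq> j \<Longrightarrow> (\<exists>b. hyp_minus n i j b \<in> \<B>) \<and> (\<exists>c. hyp_plus n i j c \<in> \<B>)"
    using B unfolding B_deformation_def isB_def by blast+
  let ?R = "(`) (del_coord m) ` restriction \<B> H0"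
  have fin: "finite ?R"
  proof -
    have "restriction \<B> H0 \<subseteq> (\<lambda>H. H0 \<inter> H) ` \<B>" by (auto simp: restriction_def)
    then show ?thesis using Bfin finite_surj by blast
  qed
  have forms: "isB (n - 1) S" if S: "S \<in> ?R" for S
  proof -
    obtain H where H: "H \<in> \<B>" "H \<noteq> H0" "H0 \<inter> H \<noteq> {}" "S = Rs n m g H"
      using S imgH by (auto simp: restriction_def)
    have ne: "Rs n m g H \<noteq> {}" using H(3) imgH[of H] by auto
    have "isB n H" using Bforms H(1) .
    then show ?thesis unfolding isB_def[of n]
    proof (elim disjE exE conjE)
      fix i a assume h: "i < n" "H = hyp_coord n i a"
      show ?thesis
      proof (cases "i = m")
        case True then show ?thesis using fc h H ne by simp
      next
        case False then show ?thesis using h H mn gen_coord jdx_lt unfolding isB_def by metis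
      qed
    next
      fix i j b assume h: "i < n" "j < n" "i \<noteq> j" "H = hyp_minus n i j b"
      show ?thesis
      proof (cases "j = m")
        case True then show ?thesis using fm h H ne by simp
      next
        case jm: False
        show ?thesis
        proof (cases "i = m")
          case True
          then have "H = hyp_minus n j m (- b)" using h minus_swap by simp
          then show ?thesis using fm[of j "-b"] h H ne True by simp
        next
          case False
          then show ?thesis using h H mn jm gen_minus[of m n i j g b] jdx_lt[of m n i] jdx_lt[of m n j]
              jdx_inj[of i m j] unfolding isB_def by metis
        qed
      qed
    next
      fix i j b assume h: "i < n" "j < n" "i \<noteq> j" "H = hyp_plus n i j b"
      show ?thesis
      proof (cases "j = m")
        case True then show ?thesis using fp h H ne by simp
      next
        case jm: False
        show ?thesis
        proof (cases "i = m")
          case True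
          then have "H = hyp_plus n j m b" using h plus_swap by simp
          then show ?thesis using fp[of j b] h H ne True by simp
        next
          case False
          then show ?thesis using h H mn jm gen_plus[of m n i j g b] jdx_lt[of m n i] jdx_lt[of m n j]
              jdx_inj[of i m j] unfolding isB_def by metis
        qed
      qed
    qed
  qed
  have memb: "T \<in> ?R" if "H \<in> \<B>" "Rs n m g H = T" "isB (n - 1) T" for H T
  proof -
    have p: "T \<noteq> {}" "T \<noteq> rspace (n - 1)" using isB_props[OF that(3)] by auto
    have "H \<noteq> H0" using p that(2) Rs_self[OF mn, of g] H0eq by auto
    moreover have "H0 \<inter> H \<noteq> {}" using p that(2) imgH[of H] by auto
    ultimately have "H0 \<inter> H \<in> restriction \<B> H0" using that(1) by (auto simp: restriction_def)
    then show ?thesis using imgH[of H] that(2) by (metis image_eqI)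
  qed
  have cc: "\<exists>a. hyp_coord (n - 1) j a \<in> ?R" if j: "j < n - 1" for j
  proof -
    have ip: "idx m j < n" "idx m j \<noteq> m" "jdx m (idx m j) = j" using idx_props[OF mn j] by auto
    obtain a where a: "hyp_coord n (idx m j) a \<in> \<B>" using Bc ip by blast
    have "isB (n - 1) (hyp_coord (n - 1) j a)" using j unfolding isB_def by blast
    then show ?thesis using memb[OF a] gen_coord[OF mn ip(2)] ip by auto
  qed
  have cmp: "(\<exists>b. hyp_minus (n - 1) i j b \<in> ?R) \<and> (\<exists>c. hyp_plus (n - 1) i j c \<in> ?R)"
    if ij: "i < n - 1" "j < n - 1" "i \<noteq> j" for i j
  proof -
    have ip: "idx m i < n" "idx m i \<noteq> m" "jdx m (idx m i) = i" using idx_props[OF mn ij(1)] by auto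
    have jp: "idx m j < n" "idx m j \<noteq> m" "jdx m (idx m j) = j" using idx_props[OF mn ij(2)] by auto
    have ne: "idx m i \<noteq> idx m j" using idx_inj ij(3) by blast
    obtain b where b: "hyp_minus n (idx m i) (idx m j) b \<in> \<B>" using Bmp ip jp ne by blast
    obtain c where c: "hyp_plus n (idx m i) (idx m j) c \<in> \<B>" using Bmp ip jp ne by blast
    have "isB (n - 1) (hyp_minus (n - 1) i j b)" "isB (n - 1) (hyp_plus (n - 1) i j c)"
      using ij unfolding isB_def by blast+
    then show ?thesis using memb[OF b] memb[OF c] gen_minus[OF mn ip(2) jp(2)] gen_plus[OF mn ip(2) jp(2)] ip jp
      by auto
  qed
  show ?thesis unfolding B_deformation_def
    using fin forms cc cmp unfolding isB_def by blast
qed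


lemma isB_coord: "i < n \<Longrightarrow> isB n (hyp_coord n i a)"
  unfolding isB_def by blast

lemma isB_minus: "i < n \<Longrightarrow> j < n \<Longrightarrow> i \<noteq> j \<Longrightarrow> isB n (hyp_minus n i j a)"
  unfolding isB_def by blast

lemma isB_plus: "i < n \<Longrightarrow> j < n \<Longrightarrow> i \<noteq> j \<Longrightarrow> isB n (hyp_plus n i j a)"
  unfolding isB_def by blast

lemma case_coord:
  assumes n2: "2 \<le> n" and B: "B_deformation n \<B>" and kn: "k < n" and H0: "hyp_coord n k a \<in> \<B>"
  shows "B_deformation (n - 1) ((`) (del_coord k) ` restriction \<B> (hyp_coord n k a))"
proof (rule generic[OF n2 B H0 kn, where g="\<lambda>_. a"])
  show "hyp_coord n k a = {x \<in> rspace n. x k = a}" by (simp add: hyp_coord_def)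
next
  fix c assume ne: "hyp_coord n k c \<noteq> hyp_coord n k a" and e: "Rs n k (\<lambda>_. a) (hyp_coord n k c) \<noteq> {}"
  have "Rs n k (\<lambda>_. a) (hyp_coord n k c) = {y \<in> rspace (n - 1). a = c}"
    using kn by (auto simp: Rs_def hyp_coord_def ins_rspace)
  then have "a = c" using e by auto
  then show "isB (n - 1) (Rs n k (\<lambda>_. a) (hyp_coord n k c))" using ne by simp
next
  fix i b assume i: "i < n" "i \<noteq> k"
  have "Rs n k (\<lambda>_. a) (hyp_minus n i k b) = hyp_coord (n - 1) (jdx k i) (a + b)"
    using kn i by (auto simp: Rs_def hyp_coord_def hyp_minus_def ins_rspace ins_other)
  then show "isB (n - 1) (Rs n k (\<lambda>_. a) (hyp_minus n i k b))"
    using isB_coord jdx_lt[OF kn i] by simp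
next
  fix i b assume i: "i < n" "i \<noteq> k"
  have "Rs n k (\<lambda>_. a) (hyp_plus n i k b) = hyp_coord (n - 1) (jdx k i) (b - a)"
    using kn i by (auto simp: Rs_def hyp_coord_def hyp_plus_def ins_rspace ins_other)
  then show "isB (n - 1) (Rs n k (\<lambda>_. a) (hyp_plus n i k b))"
    using isB_coord jdx_lt[OF kn i] by simp
qed

lemma case_minus:
  assumes n2: "2 \<le> n" and B: "B_deformation n \<B>" and kl: "k < l" and ln: "l < n" and H0: "hyp_minus n k l a \<in> \<B>"
  shows "B_deformation (n - 1) ((`) (del_coord l) ` restriction \<B> (hyp_minus n k l a))"
proof (rule generic[OF n2 B H0 ln, where g="\<lambda>y. y k - a"])
  show "hyp_minus n k l a = {x \<in> rspace n. x l = del_coord l x k - a}"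
    using kl by (auto simp: hyp_minus_def del_coord_def)
next
  have kk: "\<And>v y. insc l v y k = y k" using kl by (simp add: ins_other jdx_small)
  have kn1: "k < n - 1" using kl ln by simp
  {
  fix c
  have "Rs n l (\<lambda>y. y k - a) (hyp_coord n l c) = hyp_coord (n - 1) k (c + a)"
    using ln by (auto simp: Rs_def hyp_coord_def ins_rspace)
  then show "isB (n - 1) (Rs n l (\<lambda>y. y k - a) (hyp_coord n l c))"
    using isB_coord kn1 by simp
  }
  {
  fix i b assume i: "i < n" "i \<noteq> l" and ne: "hyp_minus n i l b \<noteq> hyp_minus n k l a"
    and e: "Rs n l (\<lambda>y. y k - a) (hyp_minus n i l b) \<noteq> {}"
  show "isB (n - 1) (Rs n l (\<lambda>y. y k - a) (hyp_minus n i l b))"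
  proof (cases "i = k")
    case True
    have "Rs n l (\<lambda>y. y k - a) (hyp_minus n i l b) = {y \<in> rspace (n - 1). a = b}"
      using ln True kk by (auto simp: Rs_def hyp_minus_def ins_rspace)
    then have "a = b" using e by auto
    then show ?thesis using ne True by simp
  next
    case False
    have "Rs n l (\<lambda>y. y k - a) (hyp_minus n i l b) = hyp_minus (n - 1) (jdx l i) k (b - a)"
      using ln i kk by (auto simp: Rs_def hyp_minus_def ins_rspace ins_other)
    moreover have "jdx l i \<noteq> k" using jdx_inj[of i l k] False i kl jdx_small[OF kl] by auto
    ultimately show ?thesis using isB_minus jdx_lt[OF ln i] kn1 by simp
  qed
  }
  {
  fix i b assume i: "i < n" "i \<noteq> l"
  show "isB (n - 1) (Rs n l (\<lambda>y. y k - a) (hyp_plus n i l b))"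
  proof (cases "i = k")
    case True
    have "Rs n l (\<lambda>y. y k - a) (hyp_plus n i l b) = hyp_coord (n - 1) k ((a + b) / 2)"
      using ln True kk by (auto simp: Rs_def hyp_plus_def hyp_coord_def ins_rspace)
    then show ?thesis using isB_coord kn1 by simp
  next
    case False
    have "Rs n l (\<lambda>y. y k - a) (hyp_plus n i l b) = hyp_plus (n - 1) (jdx l i) k (b + a)"
      using ln i kk by (auto simp: Rs_def hyp_plus_def ins_rspace ins_other)
    moreover have "jdx l i \<noteq> k" using jdx_inj[of i l k] False i kl jdx_small[OF kl] by auto
    ultimately show ?thesis using isB_plus jdx_lt[OF ln i] kn1 by simp
  qed
  }
qed

lemma case_plus:
  assumes n2: "2 \<le> n" and B: "B_deformation n \<B>" and kl: "k < l" and ln: "l < n" and H0: "hyp_plus n k l a \<in> \<B>"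
  shows "B_deformation (n - 1) ((`) (del_coord l) ` restriction \<B> (hyp_plus n k l a))"
proof (rule generic[OF n2 B H0 ln, where g="\<lambda>y. a - y k"])
  show "hyp_plus n k l a = {x \<in> rspace n. x l = a - del_coord l x k}"
    using kl by (auto simp: hyp_plus_def del_coord_def)
next
  have kk: "\<And>v y. insc l v y k = y k" using kl by (simp add: ins_other jdx_small)
  have kn1: "k < n - 1" using kl ln by simp
  {
  fix c
  have "Rs n l (\<lambda>y. a - y k) (hyp_coord n l c) = hyp_coord (n - 1) k (a - c)"
    using ln by (auto simp: Rs_def hyp_coord_def ins_rspace)
  then show "isB (n - 1) (Rs n l (\<lambda>y. a - y k) (hyp_coord n l c))"
    using isB_coord kn1 by simp
  }
  {
  fix i b assume i: "i < n" "i \<noteq> l"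
  show "isB (n - 1) (Rs n l (\<lambda>y. a - y k) (hyp_minus n i l b))"
  proof (cases "i = k")
    case True
    have "Rs n l (\<lambda>y. a - y k) (hyp_minus n i l b) = hyp_coord (n - 1) k ((a + b) / 2)"
      using ln True kk by (auto simp: Rs_def hyp_minus_def hyp_coord_def ins_rspace)
    then show ?thesis using isB_coord kn1 by simp
  next
    case False
    have "Rs n l (\<lambda>y. a - y k) (hyp_minus n i l b) = hyp_plus (n - 1) (jdx l i) k (b + a)"
      using ln i kk by (auto simp: Rs_def hyp_minus_def hyp_plus_def ins_rspace ins_other)
    moreover have "jdx l i \<noteq> k" using jdx_inj[of i l k] False i kl jdx_small[OF kl] by auto
    ultimately show ?thesis using isB_plus jdx_lt[OF ln i] kn1 by simp
  qed
  }
  {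
  fix i b assume i: "i < n" "i \<noteq> l" and ne: "hyp_plus n i l b \<noteq> hyp_plus n k l a"
    and e: "Rs n l (\<lambda>y. a - y k) (hyp_plus n i l b) \<noteq> {}"
  show "isB (n - 1) (Rs n l (\<lambda>y. a - y k) (hyp_plus n i l b))"
  proof (cases "i = k")
    case True
    have "Rs n l (\<lambda>y. a - y k) (hyp_plus n i l b) = {y \<in> rspace (n - 1). a = b}"
      using ln True kk by (auto simp: Rs_def hyp_plus_def ins_rspace)
    then have "a = b" using e by auto
    then show ?thesis using ne True by simp
  next
    case False
    have "Rs n l (\<lambda>y. a - y k) (hyp_plus n i l b) = hyp_minus (n - 1) (jdx l i) k (b - a)"
      using ln i kk by (auto simp: Rs_def hyp_minus_def hyp_plus_def ins_rspace ins_other)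
    moreover have "jdx l i \<noteq> k" using jdx_inj[of i l k] False i kl jdx_small[OF kl] by auto
    ultimately show ?thesis using isB_minus jdx_lt[OF ln i] kn1 by simp
  qed
  }
qed

theorem lemma3p2:
  fixes n :: nat and \<B> :: "(nat \<Rightarrow> real) set set" and H0 :: "(nat \<Rightarrow> real) set"
  assumes "2 \<le> n" and "B_deformation n \<B>" and "H0 \<in> \<B>"
  shows "(\<forall>k a. k < n \<and> H0 = hyp_coord n k a \<longrightarrow>
            B_deformation (n - 1) ((`) (del_coord k) ` restriction \<B> H0))
       \<and> (\<forall>k l a. k < l \<and> l < n \<and> H0 = hyp_minus n k l a \<longrightarrow>
            B_deformation (n - 1) ((`) (del_coord l) ` restriction \<B> H0))
       \<and> (\<forall>k l a. k < l \<and> l < n \<and> H0 = hyp_plus n k l a \<longrightarrow>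
            B_deformation (n - 1) ((`) (del_coord l) ` restriction \<B> H0))"
  using case_coord[OF assms(1,2)] case_minus[OF assms(1,2)] case_plus[OF assms(1,2)] assms(3)
  by blast

end
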